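(* Let $k,l$ be positive integers and $G_{k,l}(T):=1-T+T^{lk+1}-T^{k(l+1)}\in\mathbb{C}[T]$. Then $G_{k,l}(T)$ is unitary if and only if $k\in\{1,2\}$.
   Context: A polynomial $f(T)\in 1+T\cdot\mathbb{C}[T]$ is called unitary if there is a unitary matrix $M$ (of some size) such that $f(T)=\det(I-MT)$; equivalently $f(T)=\prod_i(1-\alpha_iT)$ with all $|\alpha_i|=1$. *)

theory Defs
  imports "HOL-Analysis.Analysis" "HOL-Computational_Algebra.Polynomial"
begin

text \<open>A polynomial f in 1 + T C[T] is unitary iff f(T) = prod_i (1 - alpha_i T)
  with all |alpha_i| = 1 (the equivalent characterisation given in the paper).\<close>
definition unitary_poly :: "complex poly \<Rightarrow> bool" where
  "unitary_poly f \<longleftrightarrow>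
     (\<exists>as :: complex list. (\<forall>a \<in> set as. cmod a = 1) \<and>
        f = prod_list (map (\<lambda>a. [:1, - a:]) as))"

definition G_poly :: "nat \<Rightarrow> nat \<Rightarrow> complex poly" where
  "G_poly k l = 1 - [:0, 1:] + monom 1 (l * k + 1) - monom 1 (k * (l + 1))"

end

theory Submission
  imports Defs "HOL-Computational_Algebra.Fundamental_Theorem_Algebra"
begin

lemma map_poly_cnj_mult: "map_poly cnj (p * q) = map_poly cnj p * map_poly cnj (q :: complex poly)"
  by (rule poly_eq_poly_eq_iff[THEN iffD1]) (auto simp: fun_eq_iff)

lemma refl_lin: "(a::complex) \<noteq> 0 \<Longrightarrow> reflect_poly [:1, - a:] = [:- a, 1:]"
proof -
  assume "a \<noteq> 0"
  then have "- a \<noteq> 0" by simp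
  then show ?thesis by (simp add: reflect_poly_def cCons_def)
qed

lemma unit_refl:
  assumes "\<forall>a\<in>set as. cmod a = 1"
  shows "map_poly cnj (reflect_poly (prod_list (map (\<lambda>a. [:1, - a:]) as)))
     = smult (prod_list (map (\<lambda>a. - cnj a) as)) (prod_list (map (\<lambda>a. [:1, - a:]) as))"
  using assms
proof (induction as)
  case Nil
  then show ?case by simp
next
  case (Cons a as)
  have a0: "a \<noteq> 0" using Cons.prems by auto
  have aa: "cnj a * a = 1" using Cons.prems
    by (metis complex_norm_square list.set_intros(1) mult.commute of_real_1 power_one)
  have e: "map_poly cnj [:- a, 1:] = smult (- cnj a) [:1, - a:]"
    using aa by (simp add: map_poly_pCons mult.commute)
  let ?f = "prod_list (map (\<lambda>a. [:1, - a:]) as)"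
  have "map_poly cnj (reflect_poly ([:1, - a:] * ?f)) = map_poly cnj [:- a, 1:] * map_poly cnj (reflect_poly ?f)"
    by (simp only: reflect_poly_mult map_poly_cnj_mult refl_lin[OF a0])
  also have "\<dots> = smult (- cnj a) [:1, - a:] * smult (prod_list (map (\<lambda>a. - cnj a) as)) ?f"
    using Cons e by simp
  finally have 1: "map_poly cnj (reflect_poly ([:1, - a:] * ?f)) = smult (- cnj a) [:1, - a:] * smult (prod_list (map (\<lambda>a. - cnj a) as)) ?f" .
  show ?case unfolding list.map prod_list.Cons 1
    by (simp only: mult_smult_left mult_smult_right smult_smult mult.commute)
qed

lemma coeffG: "coeff (G_poly k l) j =
   (if j = 0 then 1 else 0) - (if j = 1 then 1 else 0) + (if j = l*k+1 then 1 else 0) - (if j = k*(l+1) then 1 else 0)"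
  by (simp add: G_poly_def coeff_monom coeff_pCons split: nat.split)

lemma unit_roots:
  fixes p :: "complex poly"
  assumes "poly p 0 = 1" "\<forall>z. poly p z = 0 \<longrightarrow> cmod z = 1"
  shows "unitary_poly p"
  using assms
proof (induction "degree p" arbitrary: p rule: less_induct)
  case less
  show ?case
  proof (cases "degree p = 0")
    case True
    then have "p = [:coeff p 0:]" by (simp add: degree_0_id)
    moreover have "coeff p 0 = 1" using less.prems by (simp add: poly_0_coeff_0)
    ultimately have "p = prod_list (map (\<lambda>a. [:1, - a:]) [])" by simp
    then show ?thesis unfolding unitary_poly_def by (intro exI[of _ "[]"]) simp
  next
    case False
    then obtain z where z: "poly p z = 0"
      using fundamental_theorem_of_algebra[of p] constant_degree[of p] by auto
    then have cz: "cmod z = 1" using less.prems by blast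
    have za: "z * cnj z = 1"
      using cz by (metis complex_norm_square of_real_1 power_one)
    from z obtain r where r: "p = [:- z, 1:] * r" using poly_eq_0_iff_dvd by blast
    define q where "q = smult (- z) r"
    have pq: "p = [:1, - cnj z:] * q"
      unfolding q_def r using za by (simp add: mult.commute)
    have "q \<noteq> 0" using pq less.prems by auto
    have cz0: "cnj z \<noteq> 0" using cz by auto
    have d1: "degree [:1, - cnj z:] = 1" using cz0 by simp
    have "degree p = degree [:1, - cnj z:] + degree q"
      unfolding pq by (rule degree_mult_eq) (use \<open>q \<noteq> 0\<close> in auto)
    then have dq: "degree q < degree p" using d1 by simp
    have q0: "poly q 0 = 1" using pq less.prems by simp
    have qr: "\<forall>w. poly q w = 0 \<longrightarrow> cmod w = 1" using pq less.prems by auto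
    obtain as where as: "\<forall>a\<in>set as. cmod a = 1" "q = prod_list (map (\<lambda>a. [:1, - a:]) as)"
      using less.hyps[OF dq q0 qr] unfolding unitary_poly_def by blast
    show ?thesis unfolding unitary_poly_def
      by (intro exI[of _ "cnj z # as"]) (use as pq cz in auto)
  qed
qed

lemma degG: "k \<ge> 2 \<Longrightarrow> degree (G_poly k l) = k * (l + 1)"
proof (rule antisym)
  assume "k \<ge> 2"
  show "degree (G_poly k l) \<le> k * (l + 1)"
    by (rule degree_le) (auto simp: coeffG)
  show "k * (l + 1) \<le> degree (G_poly k l)"
    by (rule le_degree) (use \<open>k \<ge> 2\<close> in \<open>auto simp: coeffG algebra_simps\<close>)
qed

lemma polyG: "poly (G_poly k l) z = 1 - z + z ^ (l * k + 1) - z ^ (k * (l + 1))"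
  by (simp add: G_poly_def poly_monom)

theorem proposition13:
  fixes k l :: nat
  assumes "k > 0" and "l > 0"
  shows "unitary_poly (G_poly k l) \<longleftrightarrow> k \<in> {1, 2}"
proof
  assume U: "unitary_poly (G_poly k l)"
  show "k \<in> {1, 2}"
  proof (rule ccontr)
    assume "k \<notin> {1, 2}"
    then have k3: "k \<ge> 3" using assms by auto
    obtain as where as: "\<forall>a\<in>set as. cmod a = 1" "G_poly k l = prod_list (map (\<lambda>a. [:1, - a:]) as)"
      using U unfolding unitary_poly_def by blast
    define c where "c = prod_list (map (\<lambda>a. - cnj a) as)"
    have kl: "k \<le> k * l" "k \<le> l * k" using assms by auto
    have c0: "c \<noteq> 0" unfolding c_def using as(1) by (auto simp: prod_list_zero_iff)
    have E: "map_poly cnj (reflect_poly (G_poly k l)) = smult c (G_poly k l)"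
      unfolding c_def as(2) by (rule unit_refl[OF as(1)])
    have "coeff (map_poly cnj (reflect_poly (G_poly k l))) 1 = coeff (smult c (G_poly k l)) 1"
      using E by simp
    moreover have "coeff (map_poly cnj (reflect_poly (G_poly k l))) 1 = 0"
    proof -
      have e1: "k * (l + 1) = k * l + k" "l * k = k * l" by (simp_all add: algebra_simps)
      have "k * (l + 1) - 1 \<noteq> 0" "k * (l + 1) - 1 \<noteq> 1" "k * (l + 1) - 1 \<noteq> l * k + 1"
        "k * (l + 1) - 1 \<noteq> k * (l + 1)" "1 < k * (l + 1)"
        unfolding e1 using k3 kl by linarith+
      then show ?thesis using k3
        by (simp add: coeff_map_poly coeff_reflect_poly degG coeffG del: One_nat_def)
    qed
    moreover have "coeff (smult c (G_poly k l)) 1 = - c"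
      using k3 assms by (simp add: coeffG)
    ultimately show False using c0 by simp
  qed
next
  assume "k \<in> {1, 2}"
  then consider "k = 1" | "k = 2" by auto
  then show "unitary_poly (G_poly k l)"
  proof cases
    case 1
    show ?thesis
    proof (rule unit_roots)
      show "poly (G_poly k l) 0 = 1" using assms by (simp add: polyG)
      show "\<forall>z. poly (G_poly k l) z = 0 \<longrightarrow> cmod z = 1"
        using 1 by (simp add: polyG)
    qed
  next
    case 2
    show ?thesis
    proof (rule unit_roots)
      show "poly (G_poly k l) 0 = 1" using assms by (simp add: polyG)
      show "\<forall>z. poly (G_poly k l) z = 0 \<longrightarrow> cmod z = 1"
      proof (intro allI impI)
        fix z :: complex
        assume "poly (G_poly k l) z = 0"
        moreover have "z ^ (l * 2 + 1) = z ^ (2 * l + 1)" by (simp add: mult.commute)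
        moreover have "z ^ (2 * (l + 1)) = z * z ^ (2 * l + 1)" by simp
        moreover have "1 - z + w - z * w = (1 - z) * (1 + w)" for w :: complex by algebra
        ultimately have "(1 - z) * (1 + z ^ (2 * l + 1)) = 0"
          using 2 by (simp only: polyG)
        then consider "z = 1" | "z ^ (2 * l + 1) = - 1"
          by (metis add_eq_0_iff eq_iff_diff_eq_0 mult_eq_0_iff)
        then show "cmod z = 1"
        proof cases
          case 1 then show ?thesis by simp
        next
          case 2
          then have "cmod z ^ (2 * l + 1) = 1" by (metis norm_minus_cancel norm_one norm_power)
          then show ?thesis using power_eq_imp_eq_base[of "cmod z" "2 * l + 1" 1] by simp
        qed
      qed
    qed
  qed
qed

end
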